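(* Let $V$ be a nonempty set and $T:V\to V$. Then $T$ has a Drazin inverse if and only if there exists an integer $k\ge0$ such that $S:=T|_{T^k(V)}:T^k(V)\to T^k(V)$ is a bijection. If this holds, the Drazin inverse of $T$ is $S^{-(k+1)}\circ T^k$.
   Context: $T^0$ is the identity and $T^i=T\circ T^{i-1}$. A Drazin inverse of $T:V\to V$ is a map $G:V\to V$ such that, for some integer $k\ge1$, $T^k\circ G\circ T=T^k$, and also $G\circ T\circ G=G$ and $T\circ G=G\circ T$. (It is unique when it exists.) *)

theory Defs
  imports Main
begin

text \<open>Drazin inverse of a self-map T of a set V (V is the type 'a; types are nonempty).\<close>
definition drazin_inverse :: "('a \<Rightarrow> 'a) \<Rightarrow> ('a \<Rightarrow> 'a) \<Rightarrow> bool" where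
  "drazin_inverse T G \<longleftrightarrow>
     (\<exists>k::nat. k \<ge> 1 \<and> (T ^^ k) \<circ> G \<circ> T = T ^^ k) \<and> G \<circ> T \<circ> G = G \<and> T \<circ> G = G \<circ> T"

text \<open>Inverse of S = T restricted to T^k(V), as a map on T^k(V) (extended arbitrarily outside).\<close>
definition restr_inv :: "('a \<Rightarrow> 'a) \<Rightarrow> nat \<Rightarrow> 'a \<Rightarrow> 'a" where
  "restr_inv T k = inv_into (range (T ^^ k)) T"

end

theory Submission
  imports Defs
begin

lemma funpow_comm_pt: "(T ^^ n) (T x) = T ((T ^^ n) x)"
  by (metis comp_apply funpow_Suc_right funpow.simps(2))

lemma funpow_add_pt: "(T ^^ (m + n)) x = (T ^^ m) ((T ^^ n) x)"
  by (simp add: funpow_add)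

lemma drazin_pt:
  assumes "drazin_inverse T G"
  obtains m where "m \<ge> 1" "\<And>x. (T ^^ m) (G (T x)) = (T ^^ m) x"
    "\<And>x. G (T (G x)) = G x" "\<And>x. T (G x) = G (T x)"
  using assms unfolding drazin_inverse_def
  by (metis comp_apply)

lemma comm_pow: assumes "\<And>x. T (G x) = G (T x)" shows "(T ^^ n) (G x) = G ((T ^^ n) x)"
  by (induction n) (auto simp: assms)

lemma G_pow: assumes "\<And>x. T (G x) = G (T x)" "\<And>x. G (T (G x)) = G x"
  shows "G x = (T ^^ n) ((G ^^ (Suc n)) x)"
proof (induction n arbitrary: x)
  case 0 then show ?case by simp
next
  case (Suc n)
  have c: "(G ^^ n) (T z) = T ((G ^^ n) z)" for z
    using comm_pow[of G T n z] assms(1) by metis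
  have g: "G x = T (G (G x))" using assms by metis
  have "G x = (T ^^ n) ((G ^^ (Suc n)) x)" by (rule Suc)
  also have "(G ^^ (Suc n)) x = (G ^^ n) (G x)" by (simp only: funpow_Suc_right comp_def)
  also have "\<dots> = (G ^^ n) (T (G (G x)))" using g by simp
  also have "\<dots> = T ((G ^^ n) (G (G x)))" by (rule c)
  also have "(G ^^ n) (G (G x)) = (G ^^ Suc (Suc n)) x"
    by (simp only: funpow_Suc_right comp_def)
  also have "(T ^^ n) (T ((G ^^ Suc (Suc n)) x)) = (T ^^ Suc n) ((G ^^ Suc (Suc n)) x)"
    by (simp only: funpow_Suc_right comp_def)
  finally show ?case .
qed

lemma T_shift: assumes "\<And>x. (T ^^ m) (G (T x)) = (T ^^ m) x" "\<And>x. T (G x) = G (T x)"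
  shows "(T ^^ Suc m) (G x) = (T ^^ m) x"
proof -
  have "(T ^^ Suc m) (G x) = (T ^^ m) (T (G x))" by (simp add: funpow_comm_pt)
  also have "\<dots> = (T ^^ m) (G (T x))" by (simp add: assms(2))
  finally show ?thesis using assms(1) by simp
qed

context
  fixes T :: "'a \<Rightarrow> 'a" and k :: nat
  assumes bij: "bij_betw T (range (T ^^ k)) (range (T ^^ k))"
begin

abbreviation "R \<equiv> range (T ^^ k)"
abbreviation "S \<equiv> restr_inv T k"

lemma S_in: "y \<in> R \<Longrightarrow> S y \<in> R"
  unfolding restr_inv_def using bij by (metis bij_betw_def inv_into_into)
lemma TS: "y \<in> R \<Longrightarrow> T (S y) = y"
  unfolding restr_inv_def using bij by (metis bij_betw_def f_inv_into_f)
lemma ST: "x \<in> R \<Longrightarrow> S (T x) = x"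
  unfolding restr_inv_def using bij by (metis bij_betw_def inv_into_f_f)
lemma T_in: "x \<in> R \<Longrightarrow> T x \<in> R"
  using bij by (metis bij_betw_apply)
lemma Tn_in: "x \<in> R \<Longrightarrow> (T ^^ n) x \<in> R"
  by (induction n) (auto simp: T_in)
lemma Sn_in: "y \<in> R \<Longrightarrow> (S ^^ n) y \<in> R"
  by (induction n) (auto simp: S_in)
lemma TnSn: "y \<in> R \<Longrightarrow> (T ^^ n) ((S ^^ n) y) = y"
proof (induction n)
  case 0 then show ?case by simp
next
  case (Suc n)
  have "(T ^^ Suc n) ((S ^^ Suc n) y) = (T ^^ n) (T (S ((S ^^ n) y)))"
    by (simp add: funpow_comm_pt)
  also have "\<dots> = y" using Suc by (simp add: TS Sn_in)
  finally show ?case .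
qed
lemma SnTn: "x \<in> R \<Longrightarrow> (S ^^ n) ((T ^^ n) x) = x"
proof (induction n)
  case 0 then show ?case by simp
next
  case (Suc n)
  have "(S ^^ Suc n) ((T ^^ Suc n) x) = (S ^^ n) (S (T ((T ^^ n) x)))"
    by (simp add: funpow_swap1)
  also have "\<dots> = x" using Suc by (simp add: ST Tn_in)
  finally show ?case .
qed
lemma Tn_inj: "x \<in> R \<Longrightarrow> y \<in> R \<Longrightarrow> (T ^^ n) x = (T ^^ n) y \<Longrightarrow> x = y"
  by (metis SnTn)

lemma Gdef_R: "y \<in> R \<Longrightarrow> ((S ^^ (k+1)) \<circ> (T ^^ k)) y = S y"
proof -
  assume y: "y \<in> R"
  have "(S ^^ (k+1)) ((T ^^ k) y) = S ((S ^^ k) ((T ^^ k) y))" by simp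
  then show ?thesis using SnTn[OF y] by simp
qed

lemma drazin_exists: "drazin_inverse T ((S ^^ (k + 1)) \<circ> (T ^^ k))"
proof -
  define G where "G = (S ^^ (k + 1)) \<circ> (T ^^ k)"
  have Tk: "(T ^^ k) x \<in> R" for x by simp
  have GR: "G x \<in> R" for x unfolding G_def comp_def by (rule Sn_in[OF Tk])
  have comm: "T (G x) = G (T x)" for x
  proof -
    have "T (G x) = (S ^^ k) ((T ^^ k) x)"
      unfolding G_def using TS[OF Sn_in[OF Tk]] by simp
    moreover have "G (T x) = (S ^^ k) ((T ^^ k) x)"
    proof -
      have "G (T x) = (S ^^ k) (S (T ((T ^^ k) x)))"
        unfolding G_def by (simp add: funpow_comm_pt funpow_Suc_right del: funpow.simps)
      then show ?thesis using ST[OF Tk] by simp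
    qed
    ultimately show ?thesis by simp
  qed
  have GTG: "G (T (G x)) = G x" for x
    using Gdef_R[OF T_in[OF GR]] ST[OF GR] unfolding G_def[symmetric] by simp
  have third: "(T ^^ (k+1)) (G (T x)) = (T ^^ (k+1)) x" for x
  proof -
    have "G (T x) = (S ^^ k) ((T ^^ k) x)"
    proof -
      have "G (T x) = (S ^^ k) (S (T ((T ^^ k) x)))"
        unfolding G_def by (simp add: funpow_comm_pt funpow_Suc_right del: funpow.simps)
      then show ?thesis using ST[OF Tk] by simp
    qed
    then have "(T ^^ k) (G (T x)) = (T ^^ k) x" using TnSn[OF Tk] by simp
    then show ?thesis by (simp add: funpow_comm_pt[symmetric] del: funpow.simps)
      (metis funpow_comm_pt funpow.simps(2) comp_apply)
  qed
  show ?thesis unfolding drazin_inverse_def G_def[symmetric]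
    using comm GTG third by (intro conjI exI[of _ "k+1"]) (auto simp: fun_eq_iff)
qed

lemma drazin_unique:
  assumes "drazin_inverse T G"
  shows "G = (S ^^ (k + 1)) \<circ> (T ^^ k)"
proof -
  obtain m where m: "m \<ge> 1" and d1: "\<And>x. (T ^^ m) (G (T x)) = (T ^^ m) x"
    and d2: "\<And>x. G (T (G x)) = G x" and d3: "\<And>x. T (G x) = G (T x)"
    using drazin_pt[OF assms] by blast
  have Tk: "(T ^^ k) x \<in> R" for x by simp
  show ?thesis
  proof
    fix x
    have GR: "G x \<in> R" using G_pow[OF d3 d2, of x k] by (metis rangeI)
    have shift: "(T ^^ Suc n) (G x) = (T ^^ n) x" if "n \<ge> m" for n x
    proof -
      have e1: "Suc n = (n - m) + Suc m" using that by simp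
      have "(T ^^ Suc n) (G x) = (T ^^ (n - m)) ((T ^^ Suc m) (G x))"
        by (subst e1) (rule funpow_add_pt)
      also have "\<dots> = (T ^^ (n - m)) ((T ^^ m) x)" using T_shift[OF d1 d3] by simp
      also have "\<dots> = (T ^^ ((n - m) + m)) x" by (rule funpow_add_pt[symmetric])
      also have "(n - m) + m = n" using that by simp
      finally show ?thesis .
    qed
    have "(T ^^ m) ((T ^^ (k+1)) (G x)) = (T ^^ m) ((T ^^ k) x)"
    proof -
      have "(T ^^ m) ((T ^^ (k+1)) (G x)) = (T ^^ (m + (k+1))) (G x)" by (rule funpow_add_pt[symmetric])
      also have "m + (k+1) = Suc (m+k)" by simp
      also have "(T ^^ Suc (m+k)) (G x) = (T ^^ (m+k)) x" by (rule shift) simp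
      also have "\<dots> = (T ^^ m) ((T ^^ k) x)" by (rule funpow_add_pt)
      finally show ?thesis .
    qed
    then have eq: "(T ^^ (k+1)) (G x) = (T ^^ k) x"
      using Tn_inj[OF Tn_in[OF GR] Tk] by blast
    have "(S ^^ (k+1)) ((T ^^ (k+1)) (G x)) = G x" using SnTn[OF GR] .
    then show "G x = ((S ^^ (k + 1)) \<circ> (T ^^ k)) x" using eq by simp
  qed
qed

end

lemma drazin_bij:
  assumes "drazin_inverse T G"
  shows "\<exists>k. bij_betw T (range (T ^^ k)) (range (T ^^ k))"
proof -
  obtain m where m: "m \<ge> 1" and d1: "\<And>x. (T ^^ m) (G (T x)) = (T ^^ m) x"
    and d2: "\<And>x. G (T (G x)) = G x" and d3: "\<And>x. T (G x) = G (T x)"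
    using drazin_pt[OF assms] by blast
  have sh: "\<And>x. (T ^^ Suc m) (G x) = (T ^^ m) x" using T_shift[OF d1 d3] .
  have "bij_betw T (range (T ^^ m)) (range (T ^^ m))"
    unfolding bij_betw_def
  proof
    show "inj_on T (range (T ^^ m))"
    proof (rule inj_onI, clarify)
      fix x y assume h: "T ((T ^^ m) x) = T ((T ^^ m) y)"
      have "(T ^^ m) x = G (T ((T ^^ m) x))"
        using d1[of x] comm_pow[of T G, OF d3, of m "T x"] by (simp add: funpow_comm_pt)
      also have "\<dots> = G (T ((T ^^ m) y))" using h by simp
      also have "\<dots> = (T ^^ m) y"
        using d1[of y] comm_pow[of T G, OF d3, of m "T y"] by (simp add: funpow_comm_pt)
      finally show "(T ^^ m) x = (T ^^ m) y" .
    qed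
    show "T ` range (T ^^ m) = range (T ^^ m)"
    proof
      show "T ` range (T ^^ m) \<subseteq> range (T ^^ m)"
        by (auto simp: funpow_comm_pt[symmetric])
      show "range (T ^^ m) \<subseteq> T ` range (T ^^ m)"
      proof clarify
        fix x
        have "(T ^^ m) x = T ((T ^^ m) (G x))" using sh[of x] by simp
        then show "(T ^^ m) x \<in> T ` range (T ^^ m)" by blast
      qed
    qed
  qed
  then show ?thesis by blast
qed

theorem mainTheorem19:
  fixes T :: "'a \<Rightarrow> 'a"
  shows "((\<exists>G. drazin_inverse T G) \<longleftrightarrow>
           (\<exists>k::nat. bij_betw T (range (T ^^ k)) (range (T ^^ k))))
       \<and> (\<forall>k::nat. bij_betw T (range (T ^^ k)) (range (T ^^ k)) \<longrightarrow>
             drazin_inverse T ((restr_inv T k ^^ (k + 1)) \<circ> (T ^^ k))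
           \<and> (\<forall>G. drazin_inverse T G \<longrightarrow> G = (restr_inv T k ^^ (k + 1)) \<circ> (T ^^ k)))"
  using drazin_bij drazin_exists drazin_unique by blast

end
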